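(* In the setting described in the context, suppose $c^{l,n},c^{l,n+1}$ ($l=1,\dots,M$), $\psi^{n+1}$, $T^n,T^{n+1}$ satisfy Scheme I with $c^{l,n}_i,c^{l,n+1}_i,T^n_i,T^{n+1}_i>0$ for all $i,l$. Define the discrete entropy $S^m_h=-\sum_{l=1}^M(c^{l,m},\log c^{l,m})+(\log T^m+1,C_T)$ for $m=n,n+1$. Then \[ \frac{S^{n+1}_h-S^n_h}{\Delta t}\ \ge\ \varepsilon\sum_{l=1}^M\Big(\nu^lc^{l,n+1}|\hat{\mathbf u}^{l,n+1}|^2,\frac{1}{T^{n+1}}\Big)-k\sum_{\sigma\in\mathcal E_{int}}\tau_\sigma\,DT^{n+1}_{i,\sigma}\,D\Big(\frac1{T^{n+1}}\Big)_{i,\sigma}\ \ge 0, \] where in the last sum $\sigma=i|j$ with either orientation (the product is orientation-independent).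
   Context: Mesh. $\Omega\subset\mathbb R^d$ is a bounded polygonal/polyhedral domain with $\partial\Omega=\Gamma_D\cup\Gamma_N$, $\Gamma_D\cap\Gamma_N=\emptyset$. A Voronoi finite-volume mesh consists of points $\mathbf x_1,\dots,\mathbf x_N$ and control volumes $V_i=\{\mathbf y\in\Omega:|\mathbf y-\mathbf x_i|<|\mathbf y-\mathbf x_j|\ \forall j\ne i\}$. An interior face is $\sigma=\partial V_i\cap\partial V_j$ of positive $(d-1)$-measure, written $\sigma=i|j$; $\mathcal E_{int}$ is the set of interior faces and $\mathcal E_{i,int}$ those of $V_i$; $\mathcal E^D_{i,ext}$, $\mathcal E^N_{i,ext}$ are the faces of $\partial V_i$ lying in $\Gamma_D$, resp. $\Gamma_N$. $\mathrm m(\cdot)$ is Lebesgue measure (in dimension $d$ or $d-1$); $d_\sigma=|\mathbf x_i-\mathbf x_j|$ for $\sigma=i|j$ and $d_\sigma=\mathrm{dist}(\mathbf x_i,\sigma)$ for exterior faces of $V_i$; $\tau_\sigma=\mathrm m(\sigma)/d_\sigma$. Grid functions are vectors $u=(u_1,\dots,u_N)\in\mathbb R^N$; for $\sigma=i|j$, $Du_{i,\sigma}=u_j-u_i$. For positive $u$ and $\sigma=i|j$, $\mathcal A_\sigma u=\frac{(\mathrm m(V_i)+\mathrm m(V_j))u_iu_j}{\mathrm m(V_i)u_j+\mathrm m(V_j)u_i}$ (harmonic average). The discrete inner product is $(f,g)=\sum_{i=1}^N\mathrm m(V_i)f_ig_i$; products, quotients and logarithms of grid functions are taken componentwise. Scheme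 I. Parameters: $\varepsilon>0$, $k>0$, $C_T>0$, $\Delta t>0$, $\nu^l>0$, $z^l\in\mathbb R$ ($l=1,\dots,M$), a grid function $\rho^f$, Dirichlet data $\psi^D_\sigma$ on $\Gamma_D$-faces and Neumann data $g_\sigma$ on $\Gamma_N$-faces. Given $c^{l,n}$ (positive), $T^n$, the unknowns $c^{l,n+1}$ (positive), $\psi^{n+1}$, $T^{n+1}$ satisfy, for $i=1,\dots,N$: (i) $\frac{c^{l,n+1}_i-c^{l,n}_i}{\Delta t}+\frac{\varepsilon}{\mathrm m(V_i)}\sum_{\sigma\in\mathcal E_{i,int}}\mathrm m(\sigma)F^l_{i,\sigma}=0$, where for $\sigma=i|j$ \[F^l_{i,\sigma}=-\frac{1}{\nu^l d_\sigma}\Big[\mathcal A_\sigma(c^{l,n})\,D\big(\log c^{l,n+1}+z^l\psi^{n+1}\big)_{i,\sigma}+D\big(c^{l,n}(T^n-1)\big)_{i,\sigma}\Big]\] (so $F^l_{j,\sigma}=-F^l_{i,\sigma}$), and the flux through exterior faces is zero (zero-flux boundary condition); (ii) $-\frac{\varepsilon^2}{\mathrm m(V_i)}\Big[\sum_{\sigma\in\mathcal E_{i,int}}\tau_\sigma D\psi^{n+1}_{i,\sigma}+\sum_{\sigma\in\mathcal E^D_{i,ext}}\tau_\sigma(\psi^D_\sigma-\psi^{n+1}_i)\Big]-\frac{1}{\mathrm m(V_i)}\sum_{\sigma\in\mathcal E^N_{i,ext}}\mathrm m(\sigma)g_\sigma=\sum_{l=1}^Mz^lc^{l,n+1}_i+\rho^f_i$;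 (iii) $C_T\frac{T^{n+1}_i-T^n_i}{\Delta t}=\frac{k}{\mathrm m(V_i)}\sum_{\sigma\in\mathcal E_{i,int}}\tau_\sigma DT^{n+1}_{i,\sigma}+T^{n+1}_iP^{n+1}_i+\varepsilon\sum_{l=1}^M\nu^lc^{l,n+1}_i|\hat{\mathbf u}^{l,n+1}_i|^2$ (thermally insulated boundary: no exterior-face terms), where \[P^{n+1}_i=\sum_{l=1}^M\Big[\frac{\varepsilon}{\mathrm m(V_i)}\sum_{\sigma\in\mathcal E_{i,int}}\mathrm m(\sigma)F^l_{i,\sigma}\lambda^l_\sigma+(1+\log c^{l,n+1}_i)\frac{c^{l,n+1}_i-c^{l,n}_i}{\Delta t}\Big],\] $\lambda^l_\sigma$ is a face value of $\log c^{l,n+1}$ depending only on $\sigma$ (the same from both sides), and $\hat{\mathbf u}^{l,n+1}_i\in\mathbb R^d$ are given cell-wise velocity reconstructions computed from $c^{l,n+1},\psi^{n+1},T^n$; $|\hat{\mathbf u}^{l,n+1}|^2$ denotes the grid function $i\mapsto|\hat{\mathbf u}^{l,n+1}_i|^2$. *)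

theory Defs
  imports "HOL-Analysis.Analysis"
begin

text \<open>An interior face \<sigma> = i|j is represented by the two-element set {i,j} of its
  neighbouring cells; E is the set of interior faces.  mV i = m(V_i),
  mS \<sigma> = m(\<sigma>), dS \<sigma> = d_\<sigma> = |x_i - x_j|.  Exterior faces are elements
  of a type 'e, with the Dirichlet/Neumann exterior faces of V_i given by
  extD i / extN i, measure mE and distance dE.\<close>

definition other :: "'c \<Rightarrow> 'c set \<Rightarrow> 'c" where
  "other i \<sigma> = (THE j. j \<in> \<sigma> \<and> j \<noteq> i)"

text \<open>An (arbitrary) cell of a face, used to orient orientation-independent sums.\<close>
definition rep :: "'c set \<Rightarrow> 'c" where
  "rep \<sigma> = (SOME i. i \<in> \<sigma>)"

definition Dif :: "('c \<Rightarrow> real) \<Rightarrow> 'c \<Rightarrow> 'c set \<Rightarrow> real" where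
  "Dif u i \<sigma> = u (other i \<sigma>) - u i"

definition Eint :: "'c set set \<Rightarrow> 'c \<Rightarrow> 'c set set" where
  "Eint E i = {\<sigma> \<in> E. i \<in> \<sigma>}"

definition tau :: "('c set \<Rightarrow> real) \<Rightarrow> ('c set \<Rightarrow> real) \<Rightarrow> 'c set \<Rightarrow> real" where
  "tau mS dS \<sigma> = mS \<sigma> / dS \<sigma>"

definition harm :: "('c \<Rightarrow> real) \<Rightarrow> ('c \<Rightarrow> real) \<Rightarrow> 'c set \<Rightarrow> real" where
  "harm mV u \<sigma> = (let i = rep \<sigma>; j = other i \<sigma> in
      (mV i + mV j) * u i * u j / (mV i * u j + mV j * u i))"

definition dip :: "('c::finite \<Rightarrow> real) \<Rightarrow> ('c \<Rightarrow> real) \<Rightarrow> ('c \<Rightarrow> real) \<Rightarrow> real" where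
  "dip mV f g = (\<Sum>i\<in>UNIV. mV i * f i * g i)"

definition mesh :: "'c::finite set set \<Rightarrow> ('c \<Rightarrow> real) \<Rightarrow> ('c set \<Rightarrow> real) \<Rightarrow> ('c set \<Rightarrow> real)
    \<Rightarrow> ('c \<Rightarrow> 'e set) \<Rightarrow> ('c \<Rightarrow> 'e set) \<Rightarrow> ('e \<Rightarrow> real) \<Rightarrow> ('e \<Rightarrow> real) \<Rightarrow> bool" where
  "mesh E mV mS dS extD extN mE dE \<longleftrightarrow>
     (\<forall>i. mV i > 0) \<and>
     (\<forall>\<sigma>\<in>E. card \<sigma> = 2 \<and> mS \<sigma> > 0 \<and> dS \<sigma> > 0) \<and>
     (\<forall>i. finite (extD i) \<and> finite (extN i) \<and> extD i \<inter> extN i = {}) \<and>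
     (\<forall>i. \<forall>e \<in> extD i \<union> extN i. mE e > 0 \<and> dE e > 0)"

definition flux :: "('c \<Rightarrow> real) \<Rightarrow> ('c set \<Rightarrow> real) \<Rightarrow> real \<Rightarrow> real
    \<Rightarrow> ('c \<Rightarrow> real) \<Rightarrow> ('c \<Rightarrow> real) \<Rightarrow> ('c \<Rightarrow> real) \<Rightarrow> ('c \<Rightarrow> real) \<Rightarrow> 'c \<Rightarrow> 'c set \<Rightarrow> real" where
  "flux mV dS nu z cn cn1 psi1 Tn i \<sigma> =
     - (1 / (nu * dS \<sigma>)) *
       (harm mV cn \<sigma> * Dif (\<lambda>j. ln (cn1 j) + z * psi1 j) i \<sigma>
        + Dif (\<lambda>j. cn j * (Tn j - 1)) i \<sigma>)"

definition Pterm :: "'c set set \<Rightarrow> ('c \<Rightarrow> real) \<Rightarrow> ('c set \<Rightarrow> real) \<Rightarrow> ('c set \<Rightarrow> real)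
    \<Rightarrow> nat \<Rightarrow> real \<Rightarrow> real \<Rightarrow> (nat \<Rightarrow> real) \<Rightarrow> (nat \<Rightarrow> real)
    \<Rightarrow> (nat \<Rightarrow> 'c \<Rightarrow> real) \<Rightarrow> (nat \<Rightarrow> 'c \<Rightarrow> real) \<Rightarrow> ('c \<Rightarrow> real) \<Rightarrow> ('c \<Rightarrow> real)
    \<Rightarrow> (nat \<Rightarrow> 'c set \<Rightarrow> real) \<Rightarrow> 'c \<Rightarrow> real" where
  "Pterm E mV mS dS M eps dt nu z cn cn1 psi1 Tn lam i =
     (\<Sum>l=1..M. eps / mV i * (\<Sum>\<sigma>\<in>Eint E i. mS \<sigma> * flux mV dS (nu l) (z l) (cn l) (cn1 l) psi1 Tn i \<sigma> * lam l \<sigma>)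
               + (1 + ln (cn1 l i)) * (cn1 l i - cn l i) / dt)"

definition schemeI :: "'c::finite set set \<Rightarrow> ('c \<Rightarrow> real) \<Rightarrow> ('c set \<Rightarrow> real) \<Rightarrow> ('c set \<Rightarrow> real)
    \<Rightarrow> ('c \<Rightarrow> 'e set) \<Rightarrow> ('c \<Rightarrow> 'e set) \<Rightarrow> ('e \<Rightarrow> real) \<Rightarrow> ('e \<Rightarrow> real)
    \<Rightarrow> nat \<Rightarrow> real \<Rightarrow> real \<Rightarrow> real \<Rightarrow> real \<Rightarrow> (nat \<Rightarrow> real) \<Rightarrow> (nat \<Rightarrow> real)
    \<Rightarrow> ('c \<Rightarrow> real) \<Rightarrow> ('e \<Rightarrow> real) \<Rightarrow> ('e \<Rightarrow> real)
    \<Rightarrow> (nat \<Rightarrow> 'c set \<Rightarrow> real) \<Rightarrow> (nat \<Rightarrow> 'c \<Rightarrow> real ^ 'd)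
    \<Rightarrow> (nat \<Rightarrow> 'c \<Rightarrow> real) \<Rightarrow> ('c \<Rightarrow> real) \<Rightarrow> (nat \<Rightarrow> 'c \<Rightarrow> real) \<Rightarrow> ('c \<Rightarrow> real) \<Rightarrow> ('c \<Rightarrow> real) \<Rightarrow> bool" where
  "schemeI E mV mS dS extD extN mE dE M eps k CT dt nu z rhof psiD g lam uhat cn Tn cn1 psi1 Tn1 \<longleftrightarrow>
     (\<forall>l\<in>{1..M}. \<forall>i.
        (cn1 l i - cn l i) / dt
        + eps / mV i * (\<Sum>\<sigma>\<in>Eint E i. mS \<sigma> * flux mV dS (nu l) (z l) (cn l) (cn1 l) psi1 Tn i \<sigma>) = 0) \<and>
     (\<forall>i.
        - (eps\<^sup>2 / mV i) * ((\<Sum>\<sigma>\<in>Eint E i. tau mS dS \<sigma> * Dif psi1 i \<sigma>)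
                            + (\<Sum>e\<in>extD i. mE e / dE e * (psiD e - psi1 i)))
        - (1 / mV i) * (\<Sum>e\<in>extN i. mE e * g e)
        = (\<Sum>l=1..M. z l * cn1 l i) + rhof i) \<and>
     (\<forall>i.
        CT * (Tn1 i - Tn i) / dt
        = k / mV i * (\<Sum>\<sigma>\<in>Eint E i. tau mS dS \<sigma> * Dif Tn1 i \<sigma>)
          + Tn1 i * Pterm E mV mS dS M eps dt nu z cn cn1 psi1 Tn lam i
          + eps * (\<Sum>l=1..M. nu l * cn1 l i * (norm (uhat l i))\<^sup>2))"

definition entropy :: "('c::finite \<Rightarrow> real) \<Rightarrow> nat \<Rightarrow> real \<Rightarrow> (nat \<Rightarrow> 'c \<Rightarrow> real) \<Rightarrow> ('c \<Rightarrow> real) \<Rightarrow> real" where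
  "entropy mV M CT c T = - (\<Sum>l=1..M. dip mV (c l) (\<lambda>i. ln (c l i))) + dip mV (\<lambda>i. ln (T i) + 1) (\<lambda>i. CT)"

end

theory Submission
  imports Defs
begin

lemma face2:
  assumes "card \<sigma> = 2"
  obtains a b where "\<sigma> = {a,b}" "a \<noteq> b" "other a \<sigma> = b" "other b \<sigma> = a"
     "\<And>F :: 'a \<Rightarrow> real. (\<Sum>i\<in>\<sigma>. F i) = F a + F b"
proof -
  have "\<exists>a b. \<sigma> = {a,b} \<and> a \<noteq> b" using assms card_2_iff by blast
  then obtain a b where ab: "\<sigma> = {a,b}" "a \<noteq> b" by blast
  have o1: "other a \<sigma> = b" unfolding other_def ab(1) by (rule the_equality) (use ab(2) in auto)
  have o2: "other b \<sigma> = a" unfolding other_def ab(1) by (rule the_equality) (use ab(2) in auto)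
  have s2: "(\<Sum>i\<in>\<sigma>. F i) = F a + F b" for F :: "'a \<Rightarrow> real" unfolding ab(1) using ab(2) by simp
  show ?thesis
  proof (rule that)
    show "\<sigma> = {a,b}" by (rule ab(1))
    show "a \<noteq> b" by (rule ab(2))
    show "other a \<sigma> = b" by (rule o1)
    show "other b \<sigma> = a" by (rule o2)
    show "(\<Sum>i\<in>\<sigma>. F i) = F a + F b" for F :: "'a \<Rightarrow> real" by (rule s2)
  qed
qed

lemma swapE:
  fixes f :: "'c::finite \<Rightarrow> 'c set \<Rightarrow> real"
  assumes "finite E"
  shows "(\<Sum>i\<in>UNIV. \<Sum>\<sigma>\<in>Eint E i. f i \<sigma>) = (\<Sum>\<sigma>\<in>E. \<Sum>i\<in>\<sigma>. f i \<sigma>)"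
proof -
  have "(\<Sum>i\<in>UNIV. \<Sum>\<sigma>\<in>Eint E i. f i \<sigma>) = (\<Sum>i\<in>UNIV. \<Sum>\<sigma>\<in>{\<sigma>. \<sigma> \<in> E \<and> i \<in> \<sigma>}. f i \<sigma>)"
    unfolding Eint_def by simp
  also have "\<dots> = (\<Sum>\<sigma>\<in>E. \<Sum>i\<in>{i. i \<in> UNIV \<and> i \<in> \<sigma>}. f i \<sigma>)"
    by (rule sum.swap_restrict) (use assms in auto)
  finally show ?thesis by simp
qed

lemma gen: "- (c::real) * (h * (- p) + (- q)) = - (- c * (h * p + q))" by (simp add: algebra_simps)

lemma flux_anti:
  assumes "card \<sigma> = 2"
  shows "(\<Sum>i\<in>\<sigma>. mS \<sigma> * flux mV dS nu z cn cn1 psi1 Tn i \<sigma> * lam \<sigma>) = 0"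
proof -
  obtain a b where ab: "\<sigma> = {a,b}" "a \<noteq> b" "other a \<sigma> = b" "other b \<sigma> = a"
      "\<And>F :: 'a \<Rightarrow> real. (\<Sum>i\<in>\<sigma>. F i) = F a + F b"
    using face2[OF assms] by blast
  have D: "Dif u b \<sigma> = - Dif u a \<sigma>" for u :: "'a \<Rightarrow> real" using ab by (simp add: Dif_def)
  have "flux mV dS nu z cn cn1 psi1 Tn b \<sigma> = - flux mV dS nu z cn cn1 psi1 Tn a \<sigma>"
    unfolding flux_def D
    by (rule gen) 
  then show ?thesis unfolding ab(5) by (simp add: algebra_simps)
qed

lemma temp_face:
  assumes "card \<sigma> = 2" and "\<forall>i. T i > 0"
  shows "(\<Sum>i\<in>\<sigma>. 1 / T i * (tau mS dS \<sigma> * Dif T i \<sigma>))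
     = - (tau mS dS \<sigma> * Dif T (rep \<sigma>) \<sigma> * Dif (\<lambda>i. 1 / T i) (rep \<sigma>) \<sigma>)"
    and "Dif T (rep \<sigma>) \<sigma> * Dif (\<lambda>i. 1 / T i) (rep \<sigma>) \<sigma> \<le> 0"
proof -
  obtain a b where ab: "\<sigma> = {a,b}" "a \<noteq> b" "other a \<sigma> = b" "other b \<sigma> = a"
      "\<And>F :: 'a \<Rightarrow> real. (\<Sum>i\<in>\<sigma>. F i) = F a + F b"
    using face2[OF assms(1)] by blast
  have r: "rep \<sigma> \<in> \<sigma>" unfolding rep_def by (rule someI_ex) (use ab in blast)
  have Ta: "T a > 0" and Tb: "T b > 0" using assms(2) by auto
  have key: "1 / T a * (T b - T a) + 1 / T b * (T a - T b) = - ((T b - T a) * (1 / T b - 1 / T a))"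
    using Ta Tb by (simp add: field_simps)
  have key2: "(T b - T a) * (1 / T b - 1 / T a) \<le> 0"
  proof (cases "T a \<le> T b")
    case True
    then have "1 / T b \<le> 1 / T a" using Ta by (simp add: frac_le)
    then show ?thesis using True by (simp add: mult_nonneg_nonpos)
  next
    case False
    then have "1 / T a \<le> 1 / T b" using Tb by (simp add: frac_le)
    then show ?thesis using False by (simp add: mult_nonpos_nonneg)
  qed
  have key2': "(T a - T b) * (1 / T a - 1 / T b) \<le> 0" using key2 by (simp add: algebra_simps)
  have Da: "Dif u a \<sigma> = u b - u a" for u :: "'a \<Rightarrow> real" using ab(3) by (simp add: Dif_def)
  have Db: "Dif u b \<sigma> = u a - u b" for u :: "'a \<Rightarrow> real" using ab(4) by (simp add: Dif_def)
  have rab: "rep \<sigma> = a \<or> rep \<sigma> = b" using r ab(1) by blast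
  have "(\<Sum>i\<in>\<sigma>. 1 / T i * (tau mS dS \<sigma> * Dif T i \<sigma>))
      = 1 / T a * (tau mS dS \<sigma> * Dif T a \<sigma>) + 1 / T b * (tau mS dS \<sigma> * Dif T b \<sigma>)"
    by (rule ab(5))
  also have "\<dots> = tau mS dS \<sigma> * (1 / T a * (T b - T a) + 1 / T b * (T a - T b))"
    unfolding Da Db by (simp add: algebra_simps)
  also have "\<dots> = - (tau mS dS \<sigma> * ((T b - T a) * (1 / T b - 1 / T a)))"
    unfolding key by simp
  also have "\<dots> = - (tau mS dS \<sigma> * Dif T (rep \<sigma>) \<sigma> * Dif (\<lambda>i. 1 / T i) (rep \<sigma>) \<sigma>)"
  proof (cases "rep \<sigma> = a")
    case True then show ?thesis unfolding True Da by (simp add: mult.assoc)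
  next
    case False then have rb: "rep \<sigma> = b" using rab by blast
    have "(T b - T a) * (1 / T b - 1 / T a) = (T a - T b) * (1 / T a - 1 / T b)" by (simp add: algebra_simps)
    then show ?thesis unfolding rb Db by (simp add: mult.assoc)
  qed
  finally show "(\<Sum>i\<in>\<sigma>. 1 / T i * (tau mS dS \<sigma> * Dif T i \<sigma>))
     = - (tau mS dS \<sigma> * Dif T (rep \<sigma>) \<sigma> * Dif (\<lambda>i. 1 / T i) (rep \<sigma>) \<sigma>)" .
  show "Dif T (rep \<sigma>) \<sigma> * Dif (\<lambda>i. 1 / T i) (rep \<sigma>) \<sigma> \<le> 0"
    using rab key2 key2' Da Db by auto
qed

theorem theorem3p3:
  fixes E :: "'c::finite set set" and mV :: "'c \<Rightarrow> real"
    and mS dS :: "'c set \<Rightarrow> real"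
    and extD extN :: "'c \<Rightarrow> 'e set" and mE dE :: "'e \<Rightarrow> real"
    and M :: nat and eps k CT dt :: real and nu z :: "nat \<Rightarrow> real"
    and rhof :: "'c \<Rightarrow> real" and psiD g :: "'e \<Rightarrow> real"
    and lam :: "nat \<Rightarrow> 'c set \<Rightarrow> real" and uhat :: "nat \<Rightarrow> 'c \<Rightarrow> real ^ 'd"
    and cn cn1 :: "nat \<Rightarrow> 'c \<Rightarrow> real" and Tn Tn1 psi1 :: "'c \<Rightarrow> real"
  assumes "mesh E mV mS dS extD extN mE dE"
    and "eps > 0" and "k > 0" and "CT > 0" and "dt > 0"
    and "\<forall>l\<in>{1..M}. nu l > 0"
    and "schemeI E mV mS dS extD extN mE dE M eps k CT dt nu z rhof psiD g lam uhat cn Tn cn1 psi1 Tn1"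
    and "\<forall>l\<in>{1..M}. \<forall>i. cn l i > 0 \<and> cn1 l i > 0"
    and "\<forall>i. Tn i > 0 \<and> Tn1 i > 0"
  shows "(entropy mV M CT cn1 Tn1 - entropy mV M CT cn Tn) / dt
           \<ge> eps * (\<Sum>l=1..M. dip mV (\<lambda>i. nu l * cn1 l i * (norm (uhat l i))\<^sup>2) (\<lambda>i. 1 / Tn1 i))
             - k * (\<Sum>\<sigma>\<in>E. tau mS dS \<sigma> * Dif Tn1 (rep \<sigma>) \<sigma> * Dif (\<lambda>i. 1 / Tn1 i) (rep \<sigma>) \<sigma>)
       \<and> eps * (\<Sum>l=1..M. dip mV (\<lambda>i. nu l * cn1 l i * (norm (uhat l i))\<^sup>2) (\<lambda>i. 1 / Tn1 i))
             - k * (\<Sum>\<sigma>\<in>E. tau mS dS \<sigma> * Dif Tn1 (rep \<sigma>) \<sigma> * Dif (\<lambda>i. 1 / Tn1 i) (rep \<sigma>) \<sigma>) \<ge> 0"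
proof -
  note msh = assms(1)[unfolded mesh_def]
  have mVp: "\<And>i. mV i > 0" using msh by blast
  have card2: "\<And>\<sigma>. \<sigma> \<in> E \<Longrightarrow> card \<sigma> = 2" using msh by blast
  have taunn: "\<And>\<sigma>. \<sigma> \<in> E \<Longrightarrow> tau mS dS \<sigma> \<ge> 0" using msh by (auto simp: tau_def)
  have finE: "finite E" by (rule finite_subset[OF subset_UNIV]) simp
  have Tp: "\<And>i. Tn i > 0" "\<And>i. Tn1 i > 0" using assms(9) by auto
  have cp: "\<And>l i. l \<in> {1..M} \<Longrightarrow> cn l i > 0" "\<And>l i. l \<in> {1..M} \<Longrightarrow> cn1 l i > 0"
    using assms(8) by auto
  define G where "G l i = (\<Sum>\<sigma>\<in>Eint E i. mS \<sigma> * flux mV dS (nu l) (z l) (cn l) (cn1 l) psi1 Tn i \<sigma> * lam l \<sigma>)" for l i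
  define H where "H l i = (1 + ln (cn1 l i)) * (cn1 l i - cn l i) / dt" for l i
  define Qs where "Qs i = (\<Sum>\<sigma>\<in>Eint E i. tau mS dS \<sigma> * Dif Tn1 i \<sigma>)" for i
  define V where "V i = eps * (\<Sum>l=1..M. nu l * cn1 l i * (norm (uhat l i))\<^sup>2)" for i
  define P where "P i = Pterm E mV mS dS M eps dt nu z cn cn1 psi1 Tn lam i" for i
  define Ent where "Ent i = (\<Sum>l=1..M. cn1 l i * ln (cn1 l i) - cn l i * ln (cn l i))" for i
  have Pe: "P i = (\<Sum>l=1..M. eps / mV i * G l i + H l i)" for i
    unfolding P_def Pterm_def G_def H_def by simp
  have s3all: "\<forall>i. CT * (Tn1 i - Tn i) / dt
        = k / mV i * (\<Sum>\<sigma>\<in>Eint E i. tau mS dS \<sigma> * Dif Tn1 i \<sigma>)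
          + Tn1 i * Pterm E mV mS dS M eps dt nu z cn cn1 psi1 Tn lam i
          + eps * (\<Sum>l=1..M. nu l * cn1 l i * (norm (uhat l i))\<^sup>2)"
    using assms(7) unfolding schemeI_def by (elim conjE) assumption
  have s3: "CT * (Tn1 i - Tn i) / dt = k / mV i * Qs i + Tn1 i * P i + V i" for i
    unfolding Qs_def P_def V_def by (rule spec[OF s3all])
  have pc: "mV i * (CT * (ln (Tn1 i) - ln (Tn i)) / dt) - mV i * (Ent i / dt)
      \<ge> k * (1 / Tn1 i * Qs i) + eps * (\<Sum>l=1..M. G l i) + mV i * V i / Tn1 i" for i
  proof -
    have T1: "Tn1 i > 0" and T0: "Tn i > 0" using Tp by auto
    have "ln (Tn i / Tn1 i) \<le> Tn i / Tn1 i - 1" by (rule ln_le_minus_one) (use T0 T1 in simp)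
    then have q: "ln (Tn i) - ln (Tn1 i) \<le> Tn i / Tn1 i - 1"
      using T0 T1 by (simp add: ln_div)
    have "(Tn1 i - Tn i) / Tn1 i = 1 - Tn i / Tn1 i" using T1 by (simp add: field_simps)
    then have "(Tn1 i - Tn i) / Tn1 i \<le> ln (Tn1 i) - ln (Tn i)" using q by linarith
    then have h: "CT * ((Tn1 i - Tn i) / Tn1 i) \<le> CT * (ln (Tn1 i) - ln (Tn i))"
      using assms(4) by (intro mult_left_mono) auto
    have eqd: "CT * (Tn1 i - Tn i) / dt / Tn1 i = CT * ((Tn1 i - Tn i) / Tn1 i) / dt"
      by (simp add: divide_divide_eq_left mult.commute)
    have t1: "CT * (Tn1 i - Tn i) / dt / Tn1 i \<le> CT * (ln (Tn1 i) - ln (Tn i)) / dt"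
      unfolding eqd by (rule divide_right_mono[OF h]) (use assms(5) in simp)
    have t1e: "CT * (Tn1 i - Tn i) / dt / Tn1 i = k / mV i * (Qs i / Tn1 i) + P i + V i / Tn1 i"
      unfolding s3 using T1 by (simp add: field_simps)
    have c1: "cn1 l i * ln (cn1 l i) - cn l i * ln (cn l i) \<le> (1 + ln (cn1 l i)) * (cn1 l i - cn l i)"
      if l: "l \<in> {1..M}" for l
    proof -
      have a: "cn l i > 0" "cn1 l i > 0" using cp l by auto
      have "ln (cn1 l i / cn l i) \<le> cn1 l i / cn l i - 1" by (rule ln_le_minus_one) (use a in simp)
      then have "ln (cn1 l i) - ln (cn l i) \<le> (cn1 l i - cn l i) / cn l i"
        using a by (simp add: ln_div diff_divide_distrib)
      then have "cn l i * (ln (cn1 l i) - ln (cn l i)) \<le> cn1 l i - cn l i"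
        using a by (simp add: field_simps)
      then show ?thesis by (simp add: algebra_simps)
    qed
    have c1': "Ent i / dt \<le> (\<Sum>l=1..M. H l i)"
    proof -
      have "Ent i \<le> (\<Sum>l=1..M. (1 + ln (cn1 l i)) * (cn1 l i - cn l i))"
        unfolding Ent_def by (rule sum_mono) (rule c1)
      then have "Ent i / dt \<le> (\<Sum>l=1..M. (1 + ln (cn1 l i)) * (cn1 l i - cn l i)) / dt"
        using assms(5) by (simp add: divide_right_mono)
      then show ?thesis unfolding H_def by (simp add: sum_divide_distrib)
    qed
    have Pe2: "P i = eps / mV i * (\<Sum>l=1..M. G l i) + (\<Sum>l=1..M. H l i)"
      unfolding Pe by (simp add: sum.distrib sum_distrib_left)
    have "CT * (ln (Tn1 i) - ln (Tn i)) / dt - Ent i / dt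
        \<ge> k / mV i * (Qs i / Tn1 i) + eps / mV i * (\<Sum>l=1..M. G l i) + V i / Tn1 i"
      using t1 t1e c1' Pe2 by linarith
    then have "mV i * (CT * (ln (Tn1 i) - ln (Tn i)) / dt - Ent i / dt)
        \<ge> mV i * (k / mV i * (Qs i / Tn1 i) + eps / mV i * (\<Sum>l=1..M. G l i) + V i / Tn1 i)"
      using mVp[of i] by (intro mult_left_mono) auto
    moreover have "mV i * (k / mV i * (Qs i / Tn1 i) + eps / mV i * (\<Sum>l=1..M. G l i) + V i / Tn1 i)
       = k * (1 / Tn1 i * Qs i) + eps * (\<Sum>l=1..M. G l i) + mV i * V i / Tn1 i"
      using mVp[of i] by (simp add: field_simps)
    ultimately show ?thesis by (simp add: right_diff_distrib)
  qed
  have sumpc: "(\<Sum>i\<in>UNIV. mV i * (CT * (ln (Tn1 i) - ln (Tn i)) / dt) - mV i * (Ent i / dt))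
      \<ge> (\<Sum>i\<in>UNIV. k * (1 / Tn1 i * Qs i) + eps * (\<Sum>l=1..M. G l i) + mV i * V i / Tn1 i)"
    by (rule sum_mono) (rule pc)
  define R1 where "R1 = eps * (\<Sum>l=1..M. dip mV (\<lambda>i. nu l * cn1 l i * (norm (uhat l i))\<^sup>2) (\<lambda>i. 1 / Tn1 i))"
  define R2 where "R2 = (\<Sum>\<sigma>\<in>E. tau mS dS \<sigma> * Dif Tn1 (rep \<sigma>) \<sigma> * Dif (\<lambda>i. 1 / Tn1 i) (rep \<sigma>) \<sigma>)"
  have L: "(\<Sum>i\<in>UNIV. mV i * (CT * (ln (Tn1 i) - ln (Tn i)) / dt) - mV i * (Ent i / dt))
      = (entropy mV M CT cn1 Tn1 - entropy mV M CT cn Tn) / dt"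
  proof -
    have e1: "(\<Sum>i\<in>UNIV. mV i * Ent i) = (\<Sum>l=1..M. dip mV (cn1 l) (\<lambda>i. ln (cn1 l i))) - (\<Sum>l=1..M. dip mV (cn l) (\<lambda>i. ln (cn l i)))"
    proof -
      have "(\<Sum>i\<in>UNIV. mV i * Ent i) = (\<Sum>i\<in>UNIV. \<Sum>l=1..M. mV i * cn1 l i * ln (cn1 l i) - mV i * cn l i * ln (cn l i))"
        unfolding Ent_def by (simp add: sum_distrib_left right_diff_distrib mult.assoc)
      also have "\<dots> = (\<Sum>l=1..M. \<Sum>i\<in>UNIV. mV i * cn1 l i * ln (cn1 l i) - mV i * cn l i * ln (cn l i))"
        by (rule sum.swap)
      also have "\<dots> = (\<Sum>l=1..M. dip mV (cn1 l) (\<lambda>i. ln (cn1 l i)) - dip mV (cn l) (\<lambda>i. ln (cn l i)))"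
        unfolding dip_def by (simp only: sum_subtractf)
      finally show ?thesis by (simp only: sum_subtractf)
    qed
    have e2: "dip mV (\<lambda>i. ln (Tn1 i) + 1) (\<lambda>i. CT) - dip mV (\<lambda>i. ln (Tn i) + 1) (\<lambda>i. CT)
        = (\<Sum>i\<in>UNIV. mV i * (CT * (ln (Tn1 i) - ln (Tn i))))"
      unfolding dip_def by (simp add: sum_subtractf[symmetric] algebra_simps)
    have "(\<Sum>i\<in>UNIV. mV i * (CT * (ln (Tn1 i) - ln (Tn i)) / dt) - mV i * (Ent i / dt))
        = ((\<Sum>i\<in>UNIV. mV i * (CT * (ln (Tn1 i) - ln (Tn i)))) - (\<Sum>i\<in>UNIV. mV i * Ent i)) / dt"
      by (simp add: sum_subtractf sum_divide_distrib diff_divide_distrib)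
    also have "\<dots> = (entropy mV M CT cn1 Tn1 - entropy mV M CT cn Tn) / dt"
      unfolding e1 e2[symmetric] entropy_def by simp
    finally show ?thesis .
  qed
  have r1: "(\<Sum>i\<in>UNIV. k * (1 / Tn1 i * Qs i)) = - k * R2"
  proof -
    have "(\<Sum>i\<in>UNIV. k * (1 / Tn1 i * Qs i)) = k * (\<Sum>i\<in>UNIV. \<Sum>\<sigma>\<in>Eint E i. 1 / Tn1 i * (tau mS dS \<sigma> * Dif Tn1 i \<sigma>))"
      unfolding Qs_def by (simp add: sum_distrib_left)
    also have "\<dots> = k * (\<Sum>\<sigma>\<in>E. \<Sum>i\<in>\<sigma>. 1 / Tn1 i * (tau mS dS \<sigma> * Dif Tn1 i \<sigma>))"
      by (simp add: swapE[OF finE])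
    also have "\<dots> = k * (\<Sum>\<sigma>\<in>E. - (tau mS dS \<sigma> * Dif Tn1 (rep \<sigma>) \<sigma> * Dif (\<lambda>i. 1 / Tn1 i) (rep \<sigma>) \<sigma>))"
      using temp_face(1)[OF card2 ] Tp(2) by (simp cong: sum.cong)
    finally show ?thesis unfolding R2_def by (simp add: sum_negf)
  qed
  have r2: "(\<Sum>i\<in>UNIV. eps * (\<Sum>l=1..M. G l i)) = 0"
  proof -
    have "(\<Sum>i\<in>UNIV. G l i) = 0" for l
      unfolding G_def swapE[OF finE] using flux_anti[OF card2] by (simp cong: sum.cong)
    then have "(\<Sum>l=1..M. \<Sum>i\<in>UNIV. G l i) = 0" by simp
    then have "(\<Sum>i\<in>UNIV. \<Sum>l=1..M. G l i) = 0" by (subst sum.swap)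
    then show ?thesis by (simp only: sum_distrib_left[symmetric])
  qed
  have r3: "(\<Sum>i\<in>UNIV. mV i * V i / Tn1 i) = R1"
  proof -
    have "(\<Sum>i\<in>UNIV. mV i * V i / Tn1 i) = (\<Sum>i\<in>UNIV. \<Sum>l=1..M. eps * (mV i * (nu l * cn1 l i * (norm (uhat l i))\<^sup>2) * (1 / Tn1 i)))"
      unfolding V_def by (simp add: sum_distrib_left sum_divide_distrib mult_ac)
    also have "\<dots> = (\<Sum>l=1..M. \<Sum>i\<in>UNIV. eps * (mV i * (nu l * cn1 l i * (norm (uhat l i))\<^sup>2) * (1 / Tn1 i)))"
      by (rule sum.swap)
    also have "\<dots> = R1"
      unfolding R1_def dip_def by (simp add: sum_distrib_left)
    finally show ?thesis .
  qed
  have main: "(entropy mV M CT cn1 Tn1 - entropy mV M CT cn Tn) / dt \<ge> R1 - k * R2"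
  proof -
    have "(\<Sum>i\<in>UNIV. k * (1 / Tn1 i * Qs i) + eps * (\<Sum>l=1..M. G l i) + mV i * V i / Tn1 i)
       = (\<Sum>i\<in>UNIV. k * (1 / Tn1 i * Qs i)) + (\<Sum>i\<in>UNIV. eps * (\<Sum>l=1..M. G l i)) + (\<Sum>i\<in>UNIV. mV i * V i / Tn1 i)"
      by (simp only: sum.distrib)
    then show ?thesis using sumpc L r1 r2 r3 by linarith
  qed
  have R1nn: "R1 \<ge> 0"
    unfolding R1_def dip_def using assms(2) assms(6) cp(2) mVp Tp(2)
    by (intro mult_nonneg_nonneg sum_nonneg) (auto intro!: mult_nonneg_nonneg less_imp_le)
  have R2np: "R2 \<le> 0"
    unfolding R2_def
  proof (rule sum_nonpos)
    fix \<sigma> assume s: "\<sigma> \<in> E"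
    have "Dif Tn1 (rep \<sigma>) \<sigma> * Dif (\<lambda>i. 1 / Tn1 i) (rep \<sigma>) \<sigma> \<le> 0"
      using temp_face(2)[OF card2[OF s]] Tp(2) by blast
    then show "tau mS dS \<sigma> * Dif Tn1 (rep \<sigma>) \<sigma> * Dif (\<lambda>i. 1 / Tn1 i) (rep \<sigma>) \<sigma> \<le> 0"
      using taunn[OF s] by (simp add: mult.assoc mult_nonneg_nonpos)
  qed
  have "R1 - k * R2 \<ge> 0" proof -
    have "k * R2 \<le> 0" using R2np assms(3) by (simp add: mult_nonneg_nonpos)
    then show ?thesis using R1nn by linarith
  qed
  then show ?thesis using main unfolding R1_def R2_def by blast
qed

end
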